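(* Let $\sigma$ be a Radon measure without atoms on $\mathbb{R}^N$. There exist Borel sets $E^1_n,E^2_n\subset\mathbb{R}^N$, $n\in\mathbb{N}$, such that: (1) for every $n$, $\operatorname{dist}(E^1_n,E^2_n)>0$; (2) for $k=1,2$ the operators $P^k_nf:=\mathbf{1}_{E^k_n}f$ converge to $\tfrac12 I$ in the weak operator topology of $L^2(\sigma)$ as $n\to\infty$; (3) for every $p\in[1,\infty)$, $k=1,2$ and $f\in L^p(\sigma)$, $\lim_{n\to\infty}\|\mathbf{1}_{E^k_n}f\|_{L^p(\sigma)}=2^{-1/p}\|f\|_{L^p(\sigma)}$. *)

theory Defs
  imports "HOL-Analysis.Analysis"
begin

text \<open>A Radon measure on a Euclidean space: a Borel measure that is finite on compact sets
(on R^N local finiteness implies regularity).\<close>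
definition radon_measure :: "'a::euclidean_space measure \<Rightarrow> bool" where
  "radon_measure M \<longleftrightarrow> sets M = sets borel \<and> (\<forall>K. compact K \<longrightarrow> emeasure M K < \<infinity>)"

definition atomless :: "'a measure \<Rightarrow> bool" where
  "atomless M \<longleftrightarrow> (\<forall>x \<in> space M. emeasure M {x} = 0)"

definition in_Lp :: "real \<Rightarrow> 'a measure \<Rightarrow> ('a \<Rightarrow> real) \<Rightarrow> bool" where
  "in_Lp p M f \<longleftrightarrow> f \<in> borel_measurable M \<and> integrable M (\<lambda>x. \<bar>f x\<bar> powr p)"

definition Lp_norm :: "real \<Rightarrow> 'a measure \<Rightarrow> ('a \<Rightarrow> real) \<Rightarrow> real" where
  "Lp_norm p M f = (\<integral>x. \<bar>f x\<bar> powr p \<partial>M) powr (1 / p)"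

end

theory Submission
  imports Defs
begin

lemma discrete_ivt:
  fixes g :: "nat \<Rightarrow> real"
  assumes "g 0 \<le> T" "T \<le> g m" "\<And>i. i < m \<Longrightarrow> g (Suc i) \<le> g i + d" "d \<ge> 0"
  shows "\<exists>i\<le>m. g i \<le> T \<and> T \<le> g i + d"
  using assms
proof (induction m)
  case 0 then show ?case by (intro exI[of _ 0]) auto
next
  case (Suc m)
  show ?case
  proof (cases "T \<le> g m")
    case True
    then obtain i where "i \<le> m" "g i \<le> T \<and> T \<le> g i + d" using Suc by auto
    then show ?thesis by (intro exI[of _ i]) auto
  next
    case False then show ?thesis using Suc.prems by (intro exI[of _ m]) force
  qed
qed

lemma abs_half_add:
  fixes a b c e d :: real
  assumes "\<bar>a - c/2\<bar> \<le> d/2" "\<bar>b - e/2\<bar> \<le> d/2"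
  shows "\<bar>a + b - (c+e)/2\<bar> \<le> d"
proof -
  have "a + b - (c+e)/2 = (a - c/2) + (b - e/2)" by (simp add: field_simps)
  then have "\<bar>a+b-(c+e)/2\<bar> \<le> \<bar>a - c/2\<bar> + \<bar>b - e/2\<bar>" by (metis abs_triangle_ineq)
  with assms show ?thesis by linarith
qed

context
  fixes M :: "'a::euclidean_space measure"
  assumes radon: "radon_measure M" and atoml: "atomless M"
begin

lemma sets_M: "sets M = sets borel" using radon by (simp add: radon_measure_def)
lemma space_M: "space M = UNIV" using sets_eq_imp_space_eq[OF sets_M] by simp
lemma compact_fin: "compact K \<Longrightarrow> K \<in> fmeasurable M"
  using radon by (auto simp: radon_measure_def fmeasurable_def sets_M compact_imp_closed borel_closed)
lemma fm_eq: "A \<in> fmeasurable M \<Longrightarrow> emeasure M A = ennreal (measure M A)"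
  by (auto simp: fmeasurable_def emeasure_eq_ennreal_measure less_top)
lemma point_null: "emeasure M {x} = 0" using atoml space_M by (simp add: atomless_def)

lemma inner_approx:
  assumes S: "S \<in> sets borel" "emeasure M S < \<infinity>" and e: "e > 0"
  shows "\<exists>K. compact K \<and> K \<subseteq> S \<and> measure M S < measure M K + e"
proof (cases "measure M S < e")
  case True then show ?thesis by (intro exI[of _ "{}"]) auto
next
  case False
  define N where "N = density M (indicator S)"
  have sN: "sets N = sets borel" by (simp add: N_def sets_M)
  have spN: "space N = UNIV" using sets_eq_imp_space_eq[OF sN] by simp
  have eN: "emeasure N X = emeasure M (S \<inter> X)" if "X \<in> sets borel" for X
    unfolding N_def using S that by (intro emeasure_restricted) (auto simp: sets_M)
  have "emeasure N (space N) \<noteq> \<infinity>" using eN[of UNIV] S by (simp add: spN)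
  from inner_regular[OF sN this S(1)] 
  have "emeasure M S = (SUP K \<in> {K. K \<subseteq> S \<and> compact K}. emeasure N K)" using eN[OF S(1)] by simp
  moreover have "ennreal (measure M S - e) < emeasure M S"
    using S e False by (simp add: emeasure_eq_ennreal_measure[of M S] ennreal_less_iff) 
  ultimately obtain K where K: "K \<subseteq> S" "compact K" "ennreal (measure M S - e) < emeasure N K"
    by (auto simp: less_SUP_iff)
  have "emeasure N K = emeasure M K" using eN[of K] K by (simp add: Int_absorb1 compact_imp_closed borel_closed)
  also have "\<dots> = ennreal (measure M K)" using compact_fin[OF K(2)] by (rule fm_eq)
  finally have "ennreal (measure M S - e) < ennreal (measure M K)" using K(3) by simp
  hence "measure M S - e < measure M K" using False by (subst (asm) ennreal_less_iff) auto
  then show ?thesis using K by auto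
qed


lemma small_ball:
  assumes "d > 0" shows "\<exists>r>0. measure M (cball x r) < d"
proof -
  let ?A = "\<lambda>i::nat. cball x (1 / Suc i)"
  have dec: "decseq ?A"
    by (auto simp: decseq_def intro!: subset_cball divide_left_mono)
  have int: "(\<Inter>i. ?A i) = {x}"
  proof (intro equalityI subsetI)
    fix y assume y: "y \<in> (\<Inter>i. ?A i)"
    show "y \<in> {x}"
    proof (rule ccontr)
      assume "y \<notin> {x}"
      then have "dist x y > 0" by auto
      then obtain n where "1 / real (Suc n) < dist x y" using nat_approx_posE by blast
      moreover from y have "y \<in> cball x (1 / real (Suc n))" by blast
      hence "dist x y \<le> 1 / real (Suc n)" by (simp only: mem_cball)
      ultimately show False by linarith
    qed
  qed auto
  have "(\<lambda>i. emeasure M (?A i)) \<longlonglongrightarrow> emeasure M (\<Inter>i. ?A i)"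
    using dec compact_fin[OF compact_cball] by (intro Lim_emeasure_decseq) (auto simp: fmeasurable_def less_top)
  then have lim0: "(\<lambda>i. emeasure M (?A i)) \<longlonglongrightarrow> 0" using int point_null by simp
  have "eventually (\<lambda>i. emeasure M (?A i) < ennreal d) sequentially"
    using order_tendstoD(2)[OF lim0, of "ennreal d"] assms by simp
  then obtain i where i: "emeasure M (?A i) < ennreal d" by (auto simp: eventually_sequentially)
  have "emeasure M (?A i) = ennreal (measure M (?A i))" using compact_fin[of "?A i"] by (simp add: fm_eq)
  with i assms have "measure M (?A i) < d" by (simp add: ennreal_less_iff)
  then show ?thesis by (intro exI[of _ "1 / Suc i"]) auto
qed


lemma halving:
  assumes S: "S \<in> sets borel" "emeasure M S < \<infinity>" and d: "d > 0"
  shows "\<exists>K1 K2. compact K1 \<and> compact K2 \<and> K1 \<subseteq> S \<and> K2 \<subseteq> S \<and> K1 \<inter> K2 = {} \<and>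
     \<bar>measure M K1 - measure M S / 2\<bar> \<le> d \<and> \<bar>measure M K2 - measure M S / 2\<bar> \<le> d"
proof -
  define \<delta> where "\<delta> = d / 3"
  have \<delta>: "\<delta> > 0" using d by (simp add: \<delta>_def)
  obtain K where K: "compact K" "K \<subseteq> S" "measure M S < measure M K + \<delta>"
    using inner_approx[OF S \<delta>] by blast
  have Kfm: "K \<in> fmeasurable M" by (rule compact_fin[OF K(1)])
  have mKS: "measure M K \<le> measure M S"
    using K S by (intro measure_mono_fmeasurable) (auto simp: fmeasurable_def sets_M compact_imp_closed borel_closed)
  obtain r where r: "\<And>x. r x > 0 \<and> measure M (cball x (r x)) < \<delta>"
    using small_ball[OF \<delta>] by metis
  have "K \<subseteq> (\<Union>x\<in>K. ball x (r x))" using r by auto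
  then obtain C where C: "C \<subseteq> K" "finite C" "K \<subseteq> (\<Union>x\<in>C. ball x (r x))"
    using compactE_image[OF K(1), of K "\<lambda>x. ball x (r x)"] by blast
  obtain xs where xs: "set xs = C" using finite_list[OF C(2)] by blast
  define m where "m = length xs"
  define B where "B i = cball (xs ! i) (r (xs ! i))" for i
  have KB: "K \<subseteq> (\<Union>i<m. B i)"
  proof
    fix y assume "y \<in> K"
    then obtain x where x: "x \<in> C" "y \<in> ball x (r x)" using C by auto
    then obtain i where "i < m" "xs ! i = x" using xs by (auto simp: m_def in_set_conv_nth)
    then show "y \<in> (\<Union>i<m. B i)" using x by (intro UN_I[of i]) (auto simp: B_def)
  qed
  define g where "g i = measure M (K \<inter> (\<Union>l<i. B l))" for i
  have gm: "g m = measure M K" using KB by (simp add: g_def Int_absorb2)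
  have g0: "g 0 = 0" by (simp add: g_def)
  have Bfm: "B i \<in> fmeasurable M" for i by (simp add: B_def compact_fin)
  have gstep: "g (Suc i) \<le> g i + \<delta>" for i
  proof -
    have "K \<inter> (\<Union>l<Suc i. B l) = (K \<inter> (\<Union>l<i. B l)) \<union> (K \<inter> B i)" by (auto simp: lessThan_Suc)
    hence "g (Suc i) \<le> g i + measure M (K \<inter> B i)" unfolding g_def
      by (metis measure_Un_le sets.Int sets.finite_UN finite_lessThan fmeasurableD Kfm Bfm)
    also have "measure M (K \<inter> B i) \<le> measure M (B i)"
      by (rule measure_mono_fmeasurable) (use Bfm Kfm in auto)
    also have "\<dots> < \<delta>" using r by (simp add: B_def)
    finally show ?thesis by simp
  qed
  obtain i where i: "i \<le> m" "g i \<le> measure M K / 2" "measure M K / 2 \<le> g i + \<delta>"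
    using discrete_ivt[of g "measure M K / 2" m \<delta>] g0 gm gstep \<delta> by auto
  define K1 where "K1 = K \<inter> (\<Union>l<i. B l)"
  have K1c: "compact K1" unfolding K1_def B_def by (intro compact_Int_closed K(1) closed_UN) auto
  have K1fm: "K1 \<in> fmeasurable M" by (rule compact_fin[OF K1c])
  define C2 where "C2 = K - K1"
  have C2b: "C2 \<in> sets borel" using K1fm Kfm by (auto simp: C2_def sets_M[symmetric])
  have mC2: "measure M C2 = measure M K - g i"
    unfolding C2_def g_def K1_def[symmetric] using Kfm K1fm
    by (intro measure_Diff) (auto simp: K1_def fmeasurable_def)
  have "emeasure M C2 \<le> emeasure M K" using Kfm by (intro emeasure_mono) (auto simp: C2_def fmeasurable_def)
  hence "emeasure M C2 < \<infinity>" using Kfm by (auto simp: fmeasurable_def)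
  then obtain K2 where K2: "compact K2" "K2 \<subseteq> C2" "measure M C2 < measure M K2 + \<delta>"
    using inner_approx[OF C2b _ \<delta>] by blast
  have mK2: "measure M K2 \<le> measure M C2"
    using K2 C2b \<open>emeasure M C2 < \<infinity>\<close> by (intro measure_mono_fmeasurable) (auto simp: fmeasurable_def sets_M compact_imp_closed borel_closed)
  have "measure M K1 = g i" by (simp add: g_def K1_def)
  moreover have "K1 \<subseteq> S" "K2 \<subseteq> S" "K1 \<inter> K2 = {}" using K K2 by (auto simp: K1_def C2_def)
  ultimately show ?thesis using K1c K2 mC2 mK2 i mKS K(3) \<delta>
    by (intro exI[of _ K1] exI[of _ K2]) (auto simp: \<delta>_def abs_le_iff)
qed


lemma meas_split: "A \<in> fmeasurable M \<Longrightarrow> B \<in> fmeasurable M \<Longrightarrow> A \<inter> B = {} \<Longrightarrow>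
    measure M (A \<union> B) = measure M A + measure M B"
  by (rule measure_Union) (auto simp: fmeasurable_def)

lemma borel_fm: "A \<in> sets borel \<Longrightarrow> A \<subseteq> B \<Longrightarrow> B \<in> fmeasurable M \<Longrightarrow> A \<in> fmeasurable M"
  by (rule fmeasurableI2[of B]) (auto simp: sets_M)


lemma multi_halving:
  assumes "S \<in> sets borel" "emeasure M S < \<infinity>" "d > 0" "\<forall>D\<in>set Ds. D \<in> sets borel"
  shows "\<exists>K1 K2. compact K1 \<and> compact K2 \<and> K1 \<subseteq> S \<and> K2 \<subseteq> S \<and> K1 \<inter> K2 = {} \<and>
     (\<forall>D \<in> insert UNIV (set Ds). \<bar>measure M (K1 \<inter> D) - measure M (S \<inter> D) / 2\<bar> \<le> d \<and>
        \<bar>measure M (K2 \<inter> D) - measure M (S \<inter> D) / 2\<bar> \<le> d)"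
  using assms
proof (induction Ds arbitrary: S d)
  case Nil
  then obtain K1 K2 where "compact K1" "compact K2" "K1 \<subseteq> S" "K2 \<subseteq> S" "K1 \<inter> K2 = {}"
     "\<bar>measure M K1 - measure M S / 2\<bar> \<le> d" "\<bar>measure M K2 - measure M S / 2\<bar> \<le> d"
    using halving[of S d] by blast
  then show ?case by (intro exI[of _ K1] exI[of _ K2]) simp
next
  case (Cons D Ds)
  have Db: "D \<in> sets borel" and Dsb: "\<forall>D\<in>set Ds. D \<in> sets borel" using Cons.prems by auto
  have Sfm: "S \<in> fmeasurable M" using Cons.prems by (auto simp: fmeasurable_def sets_M)
  define S1 where "S1 = S \<inter> D"
  define S2 where "S2 = S - D"
  have S1b: "S1 \<in> sets borel" and S2b: "S2 \<in> sets borel" using Cons.prems Db by (auto simp: S1_def S2_def)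
  have S1fm: "S1 \<in> fmeasurable M" by (rule borel_fm[OF S1b _ Sfm]) (auto simp: S1_def)
  have S2fm: "S2 \<in> fmeasurable M" by (rule borel_fm[OF S2b _ Sfm]) (auto simp: S2_def)
  have d2: "d / 2 > 0" using Cons.prems by simp
  obtain K1a K2a where A: "compact K1a" "compact K2a" "K1a \<subseteq> S1" "K2a \<subseteq> S1" "K1a \<inter> K2a = {}"
     "\<forall>D' \<in> insert UNIV (set Ds). \<bar>measure M (K1a \<inter> D') - measure M (S1 \<inter> D') / 2\<bar> \<le> d/2 \<and>
        \<bar>measure M (K2a \<inter> D') - measure M (S1 \<inter> D') / 2\<bar> \<le> d/2"
    using Cons.IH[OF S1b _ d2 Dsb] S1fm[unfolded fmeasurable_def] by blast
  obtain K1b K2b where B: "compact K1b" "compact K2b" "K1b \<subseteq> S2" "K2b \<subseteq> S2" "K1b \<inter> K2b = {}"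
     "\<forall>D' \<in> insert UNIV (set Ds). \<bar>measure M (K1b \<inter> D') - measure M (S2 \<inter> D') / 2\<bar> \<le> d/2 \<and>
        \<bar>measure M (K2b \<inter> D') - measure M (S2 \<inter> D') / 2\<bar> \<le> d/2"
    using Cons.IH[OF S2b _ d2 Dsb] S2fm[unfolded fmeasurable_def] by blast
  have comb: "\<forall>D' \<in> insert UNIV (set (D # Ds)). \<bar>measure M ((Ka \<union> Kb) \<inter> D') - measure M (S \<inter> D') / 2\<bar> \<le> d"
    if Ka: "compact Ka" "Ka \<subseteq> S1" and Kb: "compact Kb" "Kb \<subseteq> S2"
      and ba: "\<forall>D' \<in> insert UNIV (set Ds). \<bar>measure M (Ka \<inter> D') - measure M (S1 \<inter> D') / 2\<bar> \<le> d/2"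
      and bb: "\<forall>D' \<in> insert UNIV (set Ds). \<bar>measure M (Kb \<inter> D') - measure M (S2 \<inter> D') / 2\<bar> \<le> d/2"
    for Ka Kb
  proof
    fix D' assume D': "D' \<in> insert UNIV (set (D # Ds))"
    from D' have "D' = UNIV \<or> D' = D \<or> D' \<in> set Ds" by simp
    hence D'b: "D' \<in> sets borel" using Db Dsb sets.top[of borel] by auto
    have fmI: "X \<inter> D' \<in> fmeasurable M" if "X \<in> fmeasurable M" for X
      using D'b that by (intro fmeasurableI2[OF that]) (auto simp: sets_M fmeasurable_def)
    have Kafm: "Ka \<in> fmeasurable M" "Kb \<in> fmeasurable M" using Ka(1) Kb(1) by (simp_all add: compact_fin)
    show "\<bar>measure M ((Ka \<union> Kb) \<inter> D') - measure M (S \<inter> D') / 2\<bar> \<le> d"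
    proof (cases "D' = D")
      case True
      have "(Ka \<union> Kb) \<inter> D' = Ka \<inter> UNIV" "S \<inter> D' = S1 \<inter> UNIV" using Ka(2) Kb(2) True unfolding S1_def S2_def by blast+
      moreover have "\<bar>measure M (Ka \<inter> UNIV) - measure M (S1 \<inter> UNIV) / 2\<bar> \<le> d/2" using ba by blast
      ultimately show ?thesis using Cons.prems(3) by (smt (verit) field_sum_of_halves abs_ge_zero)
    next
      case False
      hence D'': "D' \<in> insert UNIV (set Ds)" using D' by auto
      have e1: "measure M ((Ka \<union> Kb) \<inter> D') = measure M (Ka \<inter> D') + measure M (Kb \<inter> D')"
      proof -
        have "(Ka \<union> Kb) \<inter> D' = (Ka \<inter> D') \<union> (Kb \<inter> D')" by auto
        moreover have "(Ka \<inter> D') \<inter> (Kb \<inter> D') = {}" using Ka(2) Kb(2) unfolding S1_def S2_def by blast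
        ultimately show ?thesis using fmI Kafm by (simp add: meas_split)
      qed
      have e2: "measure M (S \<inter> D') = measure M (S1 \<inter> D') + measure M (S2 \<inter> D')"
      proof -
        have "S \<inter> D' = (S1 \<inter> D') \<union> (S2 \<inter> D')" by (auto simp: S1_def S2_def)
        moreover have "(S1 \<inter> D') \<inter> (S2 \<inter> D') = {}" by (auto simp: S1_def S2_def)
        ultimately show ?thesis using fmI S1fm S2fm by (simp add: meas_split)
      qed
      have "\<bar>measure M (Ka \<inter> D') - measure M (S1 \<inter> D') / 2\<bar> \<le> d/2" using ba D'' by blast
      moreover have "\<bar>measure M (Kb \<inter> D') - measure M (S2 \<inter> D') / 2\<bar> \<le> d/2" using bb D'' by blast
      ultimately show ?thesis unfolding e1 e2 by (rule abs_half_add)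
    qed
  qed
  have c1: "\<forall>D' \<in> insert UNIV (set (D # Ds)). \<bar>measure M ((K1a \<union> K1b) \<inter> D') - measure M (S \<inter> D') / 2\<bar> \<le> d"
    by (rule comb) (use A B in auto)
  have c2: "\<forall>D' \<in> insert UNIV (set (D # Ds)). \<bar>measure M ((K2a \<union> K2b) \<inter> D') - measure M (S \<inter> D') / 2\<bar> \<le> d"
    by (rule comb) (use A B in auto)
  have disj: "(K1a \<union> K1b) \<inter> (K2a \<union> K2b) = {}"
    using A(3-5) B(3-5) unfolding S1_def S2_def by blast
  have sub: "K1a \<union> K1b \<subseteq> S" "K2a \<union> K2b \<subseteq> S" using A(3,4) B(3,4) unfolding S1_def S2_def by blast+
  show ?case
    apply (rule exI[of _ "K1a \<union> K1b"], rule exI[of _ "K2a \<union> K2b"])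
    using A(1,2) B(1,2) c1 c2 disj sub by (simp add: compact_Un)
qed


lemma dense_family:
  obtains D :: "nat \<Rightarrow> 'a set" where "\<And>j. D j \<in> sets borel"
   "\<And>A e. A \<in> sets borel \<Longrightarrow> emeasure M A < \<infinity> \<Longrightarrow> e > 0 \<Longrightarrow>
      \<exists>j. D j \<in> fmeasurable M \<and> measure M (A - D j) + measure M (D j - A) < e"
proof -
  obtain BB :: "'a set set" where BB: "countable BB" "topological_basis BB"
    using ex_countable_basis by blast
  define F where "F = Union ` {X. finite X \<and> X \<subseteq> BB}"
  have Fc: "countable F" unfolding F_def using countable_Collect_finite_subset[OF BB(1)] by simp
  have Fne: "F \<noteq> {}" unfolding F_def by auto
  define D where "D = from_nat_into F"
  have DF: "range D = F" using range_from_nat_into[OF Fne Fc] by (simp add: D_def)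
  have Fopen: "open U" if "U \<in> F" for U
    using that topological_basis_open[OF BB(2)] unfolding F_def by auto
  have Db: "D j \<in> sets borel" for j using Fopen DF by auto
  have approx: "\<exists>j. D j \<in> fmeasurable M \<and> measure M (A - D j) + measure M (D j - A) < e"
    if A: "A \<in> sets borel" "emeasure M A < \<infinity>" and e: "e > 0" for A e
  proof -
    have Afm: "A \<in> fmeasurable M" using A by (simp add: fmeasurable_def sets_M)
    have inc: "incseq (\<lambda>n. A \<inter> ball 0 (real n))"
      by (auto simp: incseq_def)
    have un: "(\<Union>n. A \<inter> ball 0 (real n)) = A"
    proof (intro equalityI subsetI)
      fix x assume "x \<in> A"
      moreover obtain n where "norm x < real n" using reals_Archimedean2 by blast
      ultimately show "x \<in> (\<Union>n. A \<inter> ball 0 (real n))" by auto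
    qed auto
    have "(\<lambda>n. measure M (A \<inter> ball 0 (real n))) \<longlonglongrightarrow> measure M (\<Union>n. A \<inter> ball 0 (real n))"
      using inc A un by (intro Lim_measure_incseq) (auto simp: sets_M)
    then have lim: "(\<lambda>n. measure M (A \<inter> ball 0 (real n))) \<longlonglongrightarrow> measure M A" using un by simp
    have "eventually (\<lambda>n. measure M A - e/3 < measure M (A \<inter> ball 0 (real n))) sequentially"
      using order_tendstoD(1)[OF lim, of "measure M A - e/3"] e by simp
    then obtain R where R: "measure M A - e/3 < measure M (A \<inter> ball 0 (real R))"
      by (auto simp: eventually_sequentially)
    define A' where "A' = A \<inter> ball 0 (real R)"
    have A'b: "A' \<in> sets borel" using A by (simp add: A'_def)
    have A'fm: "A' \<in> fmeasurable M" using borel_fm[OF A'b _ Afm] by (simp add: A'_def)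
    obtain K where K: "compact K" "K \<subseteq> A'" "measure M A' < measure M K + e/3"
      using inner_approx[OF A'b _, of "e/3"] A'fm e by (auto simp: fmeasurable_def)
    have Kfm: "K \<in> fmeasurable M" using compact_fin[OF K(1)] .
    define N where "N = density M (indicator (ball 0 (real R)))"
    have sN: "sets N = sets borel" by (simp add: N_def sets_M)
    have spN: "space N = UNIV" using sets_eq_imp_space_eq[OF sN] by simp
    have eN: "emeasure N X = emeasure M (ball 0 (real R) \<inter> X)" if "X \<in> sets borel" for X
      unfolding N_def using that by (intro emeasure_restricted) (auto simp: sets_M)
    have ballfm: "ball 0 (real R) \<in> fmeasurable M"
      using borel_fm[OF _ ball_subset_cball compact_fin[OF compact_cball]] by simp
    have "emeasure N (space N) \<noteq> \<infinity>" using eN[of UNIV] fmeasurableD2[OF ballfm] by (simp add: spN)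
    from outer_regular[OF sN this A'b]
    have "emeasure M A' = (INF U \<in> {U. A' \<subseteq> U \<and> open U}. emeasure N U)"
      using eN[OF A'b] by (simp add: A'_def Int_absorb1)
    moreover have "emeasure M A' < ennreal (measure M A' + e/3)"
      using A'fm e by (simp add: fm_eq ennreal_less_iff)
    ultimately obtain U where U: "A' \<subseteq> U" "open U" "emeasure N U < ennreal (measure M A' + e/3)"
      by (auto simp: INF_less_iff)
    define U' where "U' = ball 0 (real R) \<inter> U"
    have U'o: "open U'" using U by (simp add: U'_def open_Int)
    have U'fm: "U' \<in> fmeasurable M" using borel_fm[OF _ _ ballfm, of U'] U'o by (auto simp: U'_def)
    have "emeasure M U' < ennreal (measure M A' + e/3)" using U eN[of U] by (simp add: U'_def)
    hence mU': "measure M U' < measure M A' + e/3" using U'fm by (simp add: fm_eq ennreal_less_iff)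
    have A'U': "A' \<subseteq> U'" using U by (auto simp: U'_def A'_def)
    have "\<forall>x\<in>K. \<exists>b. b \<in> BB \<and> x \<in> b \<and> b \<subseteq> U'"
    proof
      fix x assume "x \<in> K"
      hence "x \<in> U'" using K A'U' by auto
      from topological_basisE[OF BB(2) U'o this] show "\<exists>b. b \<in> BB \<and> x \<in> b \<and> b \<subseteq> U'" by blast
    qed
    then obtain bf where bf: "\<And>x. x \<in> K \<Longrightarrow> bf x \<in> BB \<and> x \<in> bf x \<and> bf x \<subseteq> U'" by metis
    have "K \<subseteq> (\<Union>x\<in>K. bf x)" using bf by auto
    then obtain C where C: "C \<subseteq> K" "finite C" "K \<subseteq> (\<Union>x\<in>C. bf x)"
      using compactE_image[OF K(1), of K bf] bf topological_basis_open[OF BB(2)] by blast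
    define V where "V = \<Union>(bf ` C)"
    have "V \<in> F" unfolding F_def V_def using C bf by auto
    then obtain j where j: "D j = V" using DF by (metis rangeE)
    have KV: "K \<subseteq> V" "V \<subseteq> U'" using C bf by (auto simp: V_def)
    have Vo: "open V" using Fopen \<open>V \<in> F\<close> by simp
    have Vfm: "V \<in> fmeasurable M" using borel_fm[OF _ KV(2) U'fm] Vo by simp
    have "measure M (A - V) \<le> measure M (A - K)"
      using KV fmeasurableD[OF fmeasurable.Diff[OF Afm Vfm]] fmeasurable.Diff[OF Afm Kfm]
      by (intro measure_mono_fmeasurable) auto
    also have "\<dots> = measure M A - measure M K"
      using K Afm Kfm by (intro measure_Diff) (auto simp: fmeasurable_def A'_def)
    finally have b1: "measure M (A - V) \<le> measure M A - measure M K" .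
    have "measure M (V - A) \<le> measure M (U' - A')"
      using KV A'U' fmeasurableD[OF fmeasurable.Diff[OF Vfm Afm]] fmeasurable.Diff[OF U'fm A'fm]
      by (intro measure_mono_fmeasurable) (auto simp: A'_def)
    also have "\<dots> = measure M U' - measure M A'"
      using A'U' U'fm A'fm by (intro measure_Diff) (auto simp: fmeasurable_def)
    finally have b2: "measure M (V - A) \<le> measure M U' - measure M A'" .
    show ?thesis using b1 b2 K(3) mU' R Vfm j by (intro exI[of _ j]) (auto simp: A'_def)
  qed
  show ?thesis using that Db approx by blast
qed


lemma fmb: "X \<in> fmeasurable M \<Longrightarrow> X \<in> sets borel"
  using fmeasurableD sets_M by metis

lemma symdiff_bound:
  assumes "X \<in> fmeasurable M" "Y \<in> fmeasurable M" "Z \<in> sets borel"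
  shows "\<bar>measure M (Z \<inter> X) - measure M (Z \<inter> Y)\<bar> \<le> measure M (X - Y) + measure M (Y - X)"
proof -
  have a: "measure M (Z \<inter> X) \<le> measure M (Z \<inter> Y) + measure M (X - Y)"
    if X: "X \<in> fmeasurable M" and Y: "Y \<in> fmeasurable M" for X Y
  proof -
    have XY: "X \<union> Y \<in> fmeasurable M" using X Y by (rule fmeasurable.Un)
    have "(Z \<inter> Y) \<union> (X - Y) \<in> fmeasurable M"
      using X Y assms(3) by (intro borel_fm[OF _ _ XY]) (auto dest: fmb)
    then have "measure M (Z \<inter> X) \<le> measure M ((Z \<inter> Y) \<union> (X - Y))"
      using X assms(3) by (intro measure_mono_fmeasurable) (auto dest!: fmb simp: sets_M)
    also have "\<dots> \<le> measure M (Z \<inter> Y) + measure M (X - Y)"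
      using X Y assms(3) by (intro measure_Un_le) (auto dest!: fmb simp: sets_M)
    finally show ?thesis .
  qed
  show ?thesis unfolding abs_le_iff
    using a[OF assms(1,2)] a[OF assms(2,1)] measure_nonneg[of M "X - Y"] measure_nonneg[of M "Y - X"] by linarith
qed

lemma half_from_bounds:
  fixes D K :: "nat \<Rightarrow> 'a set"
  assumes Db: "\<And>j. D j \<in> sets borel"
    and Dapp: "\<And>A e. A \<in> sets borel \<Longrightarrow> emeasure M A < \<infinity> \<Longrightarrow> e > 0 \<Longrightarrow>
      \<exists>j. D j \<in> fmeasurable M \<and> measure M (A - D j) + measure M (D j - A) < e"
    and Kc: "\<And>n. compact (K n)"
    and Kb: "\<And>n j. j \<le> n \<Longrightarrow> \<bar>measure M (K n \<inter> D j) - measure M (cball 0 (real n) \<inter> D j) / 2\<bar> \<le> 1 / Suc n"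
    and A: "A \<in> sets borel" "emeasure M A < \<infinity>"
  shows "(\<lambda>n. measure M (K n \<inter> A)) \<longlonglongrightarrow> measure M A / 2"
proof (rule LIMSEQ_I)
  fix r :: real assume r: "r > 0"
  define e where "e = r / 4"
  have e: "e > 0" using r by (simp add: e_def)
  have Afm: "A \<in> fmeasurable M" using A by (simp add: fmeasurable_def sets_M)
  obtain j where j: "D j \<in> fmeasurable M" "measure M (A - D j) + measure M (D j - A) < e"
    using Dapp[OF A e] by blast
  have inc: "incseq (\<lambda>n. cball 0 (real n) \<inter> D j)"
    by (auto simp: incseq_def)
  have un: "(\<Union>n. cball 0 (real n) \<inter> D j) = D j"
  proof (intro equalityI subsetI)
    fix x assume "x \<in> D j"
    moreover obtain n where "norm x < real n" using reals_Archimedean2 by blast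
    ultimately show "x \<in> (\<Union>n. cball 0 (real n) \<inter> D j)" by (intro UN_I[of n]) auto
  qed auto
  have "(\<lambda>n. measure M (cball 0 (real n) \<inter> D j)) \<longlonglongrightarrow> measure M (\<Union>n. cball 0 (real n) \<inter> D j)"
    using inc Db un j(1) by (intro Lim_measure_incseq) (auto simp: sets_M fmeasurable_def)
  then have lim: "(\<lambda>n. measure M (cball 0 (real n) \<inter> D j)) \<longlonglongrightarrow> measure M (D j)" using un by simp
  obtain N1 where N1: "\<And>n. n \<ge> N1 \<Longrightarrow> norm (measure M (cball 0 (real n) \<inter> D j) - measure M (D j)) < e"
    using LIMSEQ_D[OF lim e] by blast
  obtain N2 where N2: "1 / real (Suc N2) < e" using nat_approx_posE[OF e] by blast
  show "\<exists>no. \<forall>n\<ge>no. norm (measure M (K n \<inter> A) - measure M A / 2) < r"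
  proof (intro exI allI impI)
    fix n assume n: "n \<ge> max j (max N1 N2)"
    have Kfm: "K n \<in> fmeasurable M" using compact_fin[OF Kc] .
    have t1: "\<bar>measure M (K n \<inter> A) - measure M (K n \<inter> D j)\<bar> \<le> measure M (A - D j) + measure M (D j - A)"
      by (rule symdiff_bound[OF Afm j(1) fmb[OF Kfm]])
    have t4: "\<bar>measure M (UNIV \<inter> A) - measure M (UNIV \<inter> D j)\<bar> \<le> measure M (A - D j) + measure M (D j - A)"
      by (rule symdiff_bound[OF Afm j(1)]) simp
    have "1 / real (Suc n) \<le> 1 / real (Suc N2)" using n by (simp add: frac_le)
    then have t2: "\<bar>measure M (K n \<inter> D j) - measure M (cball 0 (real n) \<inter> D j) / 2\<bar> < e"
      using Kb[of j n] n N2 by linarith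
    have t3: "\<bar>measure M (cball 0 (real n) \<inter> D j) - measure M (D j)\<bar> < e" using N1[of n] n by simp
    show "norm (measure M (K n \<inter> A) - measure M A / 2) < r"
      unfolding real_norm_def abs_less_iff
      using t1[THEN abs_le_D1] t1[THEN abs_le_D2] t4[THEN abs_le_D1] t4[THEN abs_le_D2]
        t2[THEN less_imp_le, THEN abs_le_D1] t2[THEN less_imp_le, THEN abs_le_D2]
        t3[THEN less_imp_le, THEN abs_le_D1] t3[THEN less_imp_le, THEN abs_le_D2] j(2) t2 t3
      unfolding abs_less_iff e_def by simp
  qed
qed


lemma construction:
  obtains E1 E2 :: "nat \<Rightarrow> 'a set" where "\<And>n. compact (E1 n)" "\<And>n. compact (E2 n)"
    "\<And>n. setdist (E1 n) (E2 n) > 0"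
    "\<And>A. A \<in> sets borel \<Longrightarrow> emeasure M A < \<infinity> \<Longrightarrow> (\<lambda>n. measure M (E1 n \<inter> A)) \<longlonglongrightarrow> measure M A / 2"
    "\<And>A. A \<in> sets borel \<Longrightarrow> emeasure M A < \<infinity> \<Longrightarrow> (\<lambda>n. measure M (E2 n \<inter> A)) \<longlonglongrightarrow> measure M A / 2"
proof -
  obtain D :: "nat \<Rightarrow> 'a set" where Db: "\<And>j. D j \<in> sets borel"
    and Dapp: "\<And>A e. A \<in> sets borel \<Longrightarrow> emeasure M A < \<infinity> \<Longrightarrow> e > 0 \<Longrightarrow>
      \<exists>j. D j \<in> fmeasurable M \<and> measure M (A - D j) + measure M (D j - A) < e"
    using dense_family by blast
  define P where "P n K1 K2 \<longleftrightarrow> compact K1 \<and> compact K2 \<and> K1 \<subseteq> cball 0 (real n) \<and> K2 \<subseteq> cball 0 (real n) \<and> K1 \<inter> K2 = {} \<and>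
     (\<forall>D' \<in> insert UNIV (set (map D [0..<Suc n])).
        \<bar>measure M (K1 \<inter> D') - measure M (cball 0 (real n) \<inter> D') / 2\<bar> \<le> 1 / real (Suc n) \<and>
        \<bar>measure M (K2 \<inter> D') - measure M (cball 0 (real n) \<inter> D') / 2\<bar> \<le> 1 / real (Suc n))" for n K1 K2
  have ex: "\<exists>K1 K2. P n K1 K2" for n
  proof -
    have "emeasure M (cball 0 (real n)) < \<infinity>"
      using compact_fin[OF compact_cball] by (simp add: fmeasurable_def)
    moreover have "\<forall>D'\<in>set (map D [0..<Suc n]). D' \<in> sets borel" using Db by auto
    ultimately show ?thesis
      using multi_halving[of "cball 0 (real n)" "1 / real (Suc n)" "map D [0..<Suc n]"]
      unfolding P_def by simp
  qed
  then obtain K1 K2 where K: "\<And>n. P n (K1 n) (K2 n)" by metis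
  define v :: 'a where "v = (SOME b. b \<in> Basis)"
  have "v \<in> Basis" unfolding v_def using nonempty_Basis by (meson ex_in_conv someI_ex)
  hence v: "norm v = 1" by simp
  define a where "a n = (real n + 1) *\<^sub>R v" for n
  have na: "norm (a n) = real n + 1" "norm (- a n) = real n + 1" for n
    using v by (simp_all add: a_def)
  have notin: "a n \<notin> cball 0 (real n)" "- a n \<notin> cball 0 (real n)" for n
    using na[of n] by (auto simp: mem_cball_0)
  have aneq: "a n \<noteq> - a n" for n
  proof
    assume "a n = - a n"
    hence "(2::real) *\<^sub>R a n = 0" by (simp add: scaleR_2 eq_neg_iff_add_eq_0)
    hence "a n = 0" by simp
    with na[of n] show False by simp
  qed
  define E1 where "E1 n = insert (a n) (K1 n)" for n
  define E2 where "E2 n = insert (- a n) (K2 n)" for n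
  have E1c: "compact (E1 n)" and E2c: "compact (E2 n)" for n
    using K[of n] by (simp_all add: E1_def E2_def P_def compact_insert)
  have sd: "setdist (E1 n) (E2 n) > 0" for n
  proof -
    have "E1 n \<inter> E2 n = {}" using K[of n] notin[of n] aneq[of n] unfolding E1_def E2_def P_def by blast
    then show ?thesis using setdist_gt_0_compact_closed[OF E1c compact_imp_closed[OF E2c]]
      by (simp add: E1_def E2_def)
  qed
  have pnull: "{x} \<inter> A \<in> null_sets M" if "A \<in> sets borel" for x A
    by (rule null_sets_subset[of "{x}"]) (use that in \<open>auto simp: null_sets_def point_null sets_M\<close>)
  have half: "(\<lambda>n. measure M (insert (b n) (K n) \<inter> A)) \<longlonglongrightarrow> measure M A / 2"
    if A: "A \<in> sets borel" "emeasure M A < \<infinity>"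
      and Kc: "\<And>n. compact (K n)"
      and Kb: "\<And>n j. j \<le> n \<Longrightarrow> \<bar>measure M (K n \<inter> D j) - measure M (cball 0 (real n) \<inter> D j) / 2\<bar> \<le> 1 / Suc n"
    for K :: "nat \<Rightarrow> 'a set" and b :: "nat \<Rightarrow> 'a" and A
  proof -
    have "measure M (insert (b n) (K n) \<inter> A) = measure M (K n \<inter> A)" for n
    proof -
      have "insert (b n) (K n) \<inter> A = (K n \<inter> A) \<union> ({b n} \<inter> A)" by auto
      moreover have "K n \<inter> A \<in> sets M" using fmb[OF compact_fin[OF Kc]] A by (simp add: sets_M)
      ultimately show ?thesis using measure_Un_null_set pnull[OF A(1)] by metis
    qed
    then show ?thesis using half_from_bounds[OF Db Dapp Kc Kb A] by simp
  qed
  show ?thesis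
  proof (rule that[OF E1c E2c sd])
    fix A assume A: "A \<in> sets borel" "emeasure M A < \<infinity>"
    show "(\<lambda>n. measure M (E1 n \<inter> A)) \<longlonglongrightarrow> measure M A / 2"
      unfolding E1_def
    proof (rule half[OF A])
      show "compact (K1 n)" for n using K[of n] by (simp add: P_def)
      show "\<bar>measure M (K1 n \<inter> D j) - measure M (cball 0 (real n) \<inter> D j) / 2\<bar> \<le> 1 / Suc n" if "j \<le> n" for n j
        using K[of n] that unfolding P_def by auto
    qed
    show "(\<lambda>n. measure M (E2 n \<inter> A)) \<longlonglongrightarrow> measure M A / 2"
      unfolding E2_def
    proof (rule half[OF A])
      show "compact (K2 n)" for n using K[of n] by (simp add: P_def)
      show "\<bar>measure M (K2 n \<inter> D j) - measure M (cball 0 (real n) \<inter> D j) / 2\<bar> \<le> 1 / Suc n" if "j \<le> n" for n j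
        using K[of n] that unfolding P_def by auto
    qed
  qed
qed


lemma integral_conv:
  fixes E :: "nat \<Rightarrow> 'a set" and h :: "'a \<Rightarrow> real"
  assumes Eb: "\<And>n. E n \<in> sets borel"
    and EP: "\<And>A. A \<in> sets borel \<Longrightarrow> emeasure M A < \<infinity> \<Longrightarrow> (\<lambda>n. measure M (E n \<inter> A)) \<longlonglongrightarrow> measure M A / 2"
    and h: "integrable M h"
  shows "(\<lambda>n. \<integral>x. indicator (E n) x * h x \<partial>M) \<longlonglongrightarrow> (1/2) * (\<integral>x. h x \<partial>M)"
  using h
proof (induction rule: integrable_induct)
  case (base A c)
  have Ab: "A \<in> sets borel" using base(1) by (simp add: sets_M)
  have "(\<integral>x. indicator (E n) x * (indicator A x *\<^sub>R c) \<partial>M) = measure M (E n \<inter> A) * c" for n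
  proof -
    have "(\<lambda>x. indicator (E n) x * (indicator A x *\<^sub>R c)) = (\<lambda>x. indicator (E n \<inter> A) x * c)"
      by (auto simp: indicator_def fun_eq_iff)
    then show ?thesis by (simp add: space_M)
  qed
  moreover have "(\<integral>x. indicator A x *\<^sub>R c \<partial>M) = measure M A * c" by (simp add: space_M)
  moreover have "(\<lambda>n. measure M (E n \<inter> A) * c) \<longlonglongrightarrow> (measure M A / 2) * c"
    by (intro tendsto_mult_right EP[OF Ab base(2)])
  ultimately show ?case by (simp add: space_M)
next
  case (add f g)
  have intI: "integrable M (\<lambda>x. indicator (E n) x * f x)" "integrable M (\<lambda>x. indicator (E n) x * g x)" for n
    using integrable_real_mult_indicator[of "E n" M f] integrable_real_mult_indicator[of "E n" M g] \<open>integrable M f\<close> \<open>integrable M g\<close> Eb[of n]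
    by (simp_all add: sets_M mult.commute)
  have "(\<integral>x. indicator (E n) x * (f x + g x) \<partial>M) =
      (\<integral>x. indicator (E n) x * f x \<partial>M) + (\<integral>x. indicator (E n) x * g x \<partial>M)" for n
    using Bochner_Integration.integral_add[OF intI(1)[of n] intI(2)[of n]] by (simp add: distrib_left)
  moreover have "(\<integral>x. f x + g x \<partial>M) = (\<integral>x. f x \<partial>M) + (\<integral>x. g x \<partial>M)"
    using Bochner_Integration.integral_add[OF \<open>integrable M f\<close> \<open>integrable M g\<close>] .
  ultimately show ?case using tendsto_add[OF add(3) add(4)] by (simp add: distrib_left)
next
  case (lim f s)
  have intf: "integrable M f" by (rule lim)
  have ints: "\<And>i. integrable M (s i)" by (rule lim)
  have ptw: "\<And>x. x \<in> space M \<Longrightarrow> (\<lambda>i. s i x) \<longlonglongrightarrow> f x" by (rule lim)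
  have bnd: "\<And>i x. x \<in> space M \<Longrightarrow> norm (s i x) \<le> 2 * norm (f x)" by (rule lim)
  have IH: "\<And>i. (\<lambda>n. \<integral>x. indicator (E n) x * s i x \<partial>M) \<longlonglongrightarrow> (1/2) * (\<integral>x. s i x \<partial>M)" by (rule lim)
  have fb: "f \<in> borel_measurable M" using intf by auto
  have sb: "s i \<in> borel_measurable M" for i using ints by auto
  have L1: "(\<lambda>i. \<integral>x. \<bar>s i x - f x\<bar> \<partial>M) \<longlonglongrightarrow> (\<integral>x. 0 \<partial>M)"
  proof (rule integral_dominated_convergence[where w="\<lambda>x. 3 * \<bar>f x\<bar>"])
    show "(\<lambda>x. 0::real) \<in> borel_measurable M" by simp
    show "(\<lambda>x. \<bar>s i x - f x\<bar>) \<in> borel_measurable M" for i using sb fb by measurable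
    show "integrable M (\<lambda>x. 3 * \<bar>f x\<bar>)" using intf by simp
    show "AE x in M. (\<lambda>i. \<bar>s i x - f x\<bar>) \<longlonglongrightarrow> 0"
    proof (rule AE_I2)
      fix x assume "x \<in> space M"
      then have "(\<lambda>i. s i x - f x) \<longlonglongrightarrow> f x - f x" using ptw by (intro tendsto_diff) auto
      then show "(\<lambda>i. \<bar>s i x - f x\<bar>) \<longlonglongrightarrow> 0" using tendsto_rabs_zero by fastforce
    qed
    show "AE x in M. norm \<bar>s i x - f x\<bar> \<le> 3 * \<bar>f x\<bar>" for i
    proof (rule AE_I2)
      fix x assume "x \<in> space M"
      then have "\<bar>s i x\<bar> \<le> 2 * \<bar>f x\<bar>" using bnd by auto
      then show "norm \<bar>s i x - f x\<bar> \<le> 3 * \<bar>f x\<bar>" by simp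
    qed
  qed
  then have L1: "(\<lambda>i. \<integral>x. \<bar>s i x - f x\<bar> \<partial>M) \<longlonglongrightarrow> 0" by simp
  have intI: "integrable M (\<lambda>x. indicator (E n) x * u x)" if "integrable M u" for n and u :: "'a \<Rightarrow> real"
    using integrable_real_mult_indicator[of "E n" M u] that Eb[of n] by (simp add: sets_M mult.commute)
  show ?case
  proof (rule LIMSEQ_I)
    fix r :: real assume r: "r > 0"
    define e where "e = r / 3"
    have e: "e > 0" using r by (simp add: e_def)
    obtain i where i: "norm (\<integral>x. \<bar>s i x - f x\<bar> \<partial>M) < e" using LIMSEQ_D[OF L1 e] by auto
    obtain N where N: "\<And>n. n \<ge> N \<Longrightarrow> norm ((\<integral>x. indicator (E n) x * s i x \<partial>M) - (1/2) * (\<integral>x. s i x \<partial>M)) < e"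
      using LIMSEQ_D[OF IH[of i] e] by blast
    show "\<exists>no. \<forall>n\<ge>no. norm ((\<integral>x. indicator (E n) x * f x \<partial>M) - (1/2) * (\<integral>x. f x \<partial>M)) < r"
    proof (intro exI allI impI)
      fix n assume n: "n \<ge> N"
      have d1: "\<bar>(\<integral>x. indicator (E n) x * f x \<partial>M) - (\<integral>x. indicator (E n) x * s i x \<partial>M)\<bar> \<le> (\<integral>x. \<bar>s i x - f x\<bar> \<partial>M)"
      proof -
        have "(\<integral>x. indicator (E n) x * f x \<partial>M) - (\<integral>x. indicator (E n) x * s i x \<partial>M) =
            (\<integral>x. indicator (E n) x * f x - indicator (E n) x * s i x \<partial>M)"
          using intI[OF intf] intI[OF ints] by (rule Bochner_Integration.integral_diff[symmetric])
        also have "\<bar>\<dots>\<bar> \<le> (\<integral>x. \<bar>s i x - f x\<bar> \<partial>M)"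
          using intI[OF intf] intI[OF ints] ints intf
          by (intro integral_abs_bound_integral) (auto simp: indicator_def)
        finally show ?thesis .
      qed
      have d2: "\<bar>(\<integral>x. f x \<partial>M) - (\<integral>x. s i x \<partial>M)\<bar> \<le> (\<integral>x. \<bar>s i x - f x\<bar> \<partial>M)"
      proof -
        have "(\<integral>x. f x \<partial>M) - (\<integral>x. s i x \<partial>M) = (\<integral>x. f x - s i x \<partial>M)"
          using intf ints by (rule Bochner_Integration.integral_diff[symmetric])
        also have "\<bar>\<dots>\<bar> \<le> (\<integral>x. \<bar>s i x - f x\<bar> \<partial>M)"
          using ints intf by (intro integral_abs_bound_integral) auto
        finally show ?thesis .
      qed
      have "norm ((\<integral>x. indicator (E n) x * s i x \<partial>M) - (1/2) * (\<integral>x. s i x \<partial>M)) < e" using N n .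
      then show "norm ((\<integral>x. indicator (E n) x * f x \<partial>M) - (1/2) * (\<integral>x. f x \<partial>M)) < r"
        using d1 d2 i unfolding real_norm_def e_def abs_less_iff abs_le_iff by simp
    qed
  qed
qed

end

theorem lemma3p1:
  fixes M :: "'a::euclidean_space measure"
  assumes "radon_measure M" and "atomless M"
  shows "\<exists>E :: nat \<Rightarrow> nat \<Rightarrow> 'a set.
     (\<forall>k\<in>{1,2}. \<forall>n. E k n \<in> sets borel) \<and>
     (\<forall>n. setdist (E 1 n) (E 2 n) > 0) \<and>
     (\<forall>k\<in>{1,2}. \<forall>f g. in_Lp 2 M f \<longrightarrow> in_Lp 2 M g \<longrightarrow>
         (\<lambda>n. \<integral>x. indicator (E k n) x * f x * g x \<partial>M)
           \<longlonglongrightarrow> (1/2) * (\<integral>x. f x * g x \<partial>M)) \<and>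
     (\<forall>p. 1 \<le> p \<longrightarrow> (\<forall>k\<in>{1,2}. \<forall>f. in_Lp p M f \<longrightarrow>
         (\<lambda>n. Lp_norm p M (\<lambda>x. indicator (E k n) x * f x))
           \<longlonglongrightarrow> 2 powr (-1/p) * Lp_norm p M f))"
proof -
  obtain E1 E2 :: "nat \<Rightarrow> 'a set" where E1c: "\<And>n. compact (E1 n)" and E2c: "\<And>n. compact (E2 n)"
    and sd: "\<And>n. setdist (E1 n) (E2 n) > 0"
    and h1: "\<And>A. A \<in> sets borel \<Longrightarrow> emeasure M A < \<infinity> \<Longrightarrow> (\<lambda>n. measure M (E1 n \<inter> A)) \<longlonglongrightarrow> measure M A / 2"
    and h2: "\<And>A. A \<in> sets borel \<Longrightarrow> emeasure M A < \<infinity> \<Longrightarrow> (\<lambda>n. measure M (E2 n \<inter> A)) \<longlonglongrightarrow> measure M A / 2"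
    using construction[OF assms] by blast
  define E :: "nat \<Rightarrow> nat \<Rightarrow> 'a set" where "E k n = (if k = 1 then E1 n else E2 n)" for k n
  have Ec: "compact (E k n)" for k n using E1c E2c by (simp add: E_def)
  have Eb: "E k n \<in> sets borel" for k n using Ec[of k n] by (simp add: borel_closed compact_imp_closed)
  have EP: "(\<lambda>n. measure M (E k n \<inter> A)) \<longlonglongrightarrow> measure M A / 2"
    if "A \<in> sets borel" "emeasure M A < \<infinity>" for k A
    using h1[OF that] h2[OF that] by (cases "k = 1") (simp_all add: E_def)
  have IC: "(\<lambda>n. \<integral>x. indicator (E k n) x * h x \<partial>M) \<longlonglongrightarrow> (1/2) * (\<integral>x. h x \<partial>M)"
    if "integrable M h" for k and h :: "'a \<Rightarrow> real"
    by (rule integral_conv[OF assms Eb EP that])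
  show ?thesis
  proof (intro exI[of _ E] conjI ballI allI impI)
    show "E k n \<in> sets borel" for k n by (rule Eb)
    show "setdist (E 1 n) (E 2 n) > 0" for n using sd by (simp add: E_def)
  next
    fix k :: nat and f g :: "'a \<Rightarrow> real" assume "k \<in> {1,2}" and f: "in_Lp 2 M f" and g: "in_Lp 2 M g"
    have fg: "integrable M (\<lambda>x. f x * g x)"
    proof (rule Bochner_Integration.integrable_bound[where f="\<lambda>x. \<bar>f x\<bar> powr 2 + \<bar>g x\<bar> powr 2"])
      show "integrable M (\<lambda>x. \<bar>f x\<bar> powr 2 + \<bar>g x\<bar> powr 2)"
        using f g unfolding in_Lp_def by (intro Bochner_Integration.integrable_add) auto
      show "(\<lambda>x. f x * g x) \<in> borel_measurable M" using f g unfolding in_Lp_def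
        by (intro borel_measurable_times) auto
      show "AE x in M. norm (f x * g x) \<le> norm (\<bar>f x\<bar> powr 2 + \<bar>g x\<bar> powr 2)"
      proof (rule AE_I2)
        fix x
        have "0 \<le> (\<bar>f x\<bar> - \<bar>g x\<bar>)^2" by simp
        hence "2 * (\<bar>f x\<bar> * \<bar>g x\<bar>) \<le> \<bar>f x\<bar>^2 + \<bar>g x\<bar>^2" by (simp add: power2_eq_square algebra_simps)
        moreover have "0 \<le> \<bar>f x\<bar> * \<bar>g x\<bar>" by simp
        ultimately have "\<bar>f x\<bar> * \<bar>g x\<bar> \<le> \<bar>f x\<bar>^2 + \<bar>g x\<bar>^2" by linarith
        then show "norm (f x * g x) \<le> norm (\<bar>f x\<bar> powr 2 + \<bar>g x\<bar> powr 2)" by (simp add: abs_mult)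
      qed
    qed
    show "(\<lambda>n. \<integral>x. indicator (E k n) x * f x * g x \<partial>M) \<longlonglongrightarrow> (1/2) * (\<integral>x. f x * g x \<partial>M)"
      using IC[OF fg, of k] by (simp add: mult.assoc)
  next
    fix p :: real and k :: nat and f :: "'a \<Rightarrow> real" assume p: "1 \<le> p" and "k \<in> {1,2}" and f: "in_Lp p M f"
    have hint: "integrable M (\<lambda>x. \<bar>f x\<bar> powr p)" using f by (simp add: in_Lp_def)
    have eq: "Lp_norm p M (\<lambda>x. indicator (E k n) x * f x) = (\<integral>x. indicator (E k n) x * \<bar>f x\<bar> powr p \<partial>M) powr (1/p)" for n
    proof -
      have "\<bar>indicator (E k n) x * f x\<bar> powr p = indicator (E k n) x * \<bar>f x\<bar> powr p" for x
        using p by (simp add: indicator_def abs_mult)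
      then show ?thesis by (simp add: Lp_norm_def)
    qed
    define I where "I = (\<integral>x. \<bar>f x\<bar> powr p \<partial>M)"
    have I0: "I \<ge> 0" by (simp add: I_def)
    have "(\<lambda>n. (\<integral>x. indicator (E k n) x * \<bar>f x\<bar> powr p \<partial>M) powr (1/p)) \<longlonglongrightarrow> ((1/2) * I) powr (1/p)"
      using IC[OF hint, of k] p unfolding I_def
      by (intro tendsto_powr2) (auto intro!: always_eventually integral_nonneg)
    moreover have "((1/2) * I) powr (1/p) = 2 powr (-1/p) * Lp_norm p M f"
    proof -
      have m: "2 powr (-1/p) = 1 / 2 powr (1/p)" by (simp add: powr_minus_divide[symmetric])
      have "((1/2) * I) powr (1/p) = (I / 2) powr (1/p)" by simp
      also have "\<dots> = I powr (1/p) / 2 powr (1/p)" by (rule powr_divide)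
      finally show ?thesis unfolding m Lp_norm_def I_def by simp
    qed
    ultimately show "(\<lambda>n. Lp_norm p M (\<lambda>x. indicator (E k n) x * f x)) \<longlonglongrightarrow> 2 powr (-1/p) * Lp_norm p M f"
      by (simp add: eq)
  qed
qed

end
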